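(* For every Hessenberg function $h$ on $\{1,\dots,n\}$, $\mathcal{A}_h((n))=\mathcal{B}_h$.
   Context: A Hessenberg function is $h:\{1,\dots,n\}\to\{1,\dots,n\}$, $h_i=h(i)$, with $i\le h_i\le n$ and $h_i\le h_{i+1}$. Degree tuple: $\beta_i=i-\#\{k:h_k<i\}$. $\mathcal{B}_h=\{x_1^{\alpha_1}\cdots x_n^{\alpha_n}:0\le\alpha_i\le\beta_i-1\}$. An $(h,(n))$-filling is a permutation $T=w_1\cdots w_n$ of $1,\dots,n$ in a single row with $w_t\le h(w_{t+1})$ for all $t$. A dimension pair of $T$ is $(a,b)$ with $b>a$, $b$ to the left of $a$, and, if $a$ is immediately followed by $c$, $b\le h(c)$. $D^T_j$ is the set of dimension pairs $(a,j)$, $\Phi(T)=\prod_{j=2}^n x_j^{|D^T_j|}$, and $\mathcal{A}_h((n))=\{\Phi(T):T\text{ an }(h,(n))\text{-filling}\}$. *)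

theory Defs
  imports Main
begin

text \<open>A Hessenberg function on {1..n}, represented as h :: nat => nat (values outside {1..n} irrelevant).\<close>
definition hessenberg :: "nat \<Rightarrow> (nat \<Rightarrow> nat) \<Rightarrow> bool" where
  "hessenberg n h \<longleftrightarrow> (\<forall>i\<in>{1..n}. i \<le> h i \<and> h i \<le> n) \<and> (\<forall>i. 1 \<le> i \<and> i < n \<longrightarrow> h i \<le> h (Suc i))"

definition degree_tuple :: "nat \<Rightarrow> (nat \<Rightarrow> nat) \<Rightarrow> nat \<Rightarrow> int" where
  "degree_tuple n h i = int i - int (card {k\<in>{1..n}. h k < i})"

text \<open>Monomials x_1^a_1 ... x_n^a_n are represented by their exponent vectors
  alpha :: nat => nat, with alpha i = 0 for i outside {1..n}.\<close>
definition B_h :: "nat \<Rightarrow> (nat \<Rightarrow> nat) \<Rightarrow> (nat \<Rightarrow> nat) set" where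
  "B_h n h = {\<alpha>. (\<forall>i\<in>{1..n}. 0 \<le> int (\<alpha> i) \<and> int (\<alpha> i) \<le> degree_tuple n h i - 1)
                 \<and> (\<forall>i. i \<notin> {1..n} \<longrightarrow> \<alpha> i = 0)}"

text \<open>An (h,(n))-filling: a one-row arrangement w_1 ... w_n (list, 0-indexed) of 1..n
  with w_t <= h(w_{t+1}).\<close>
definition filling :: "nat \<Rightarrow> (nat \<Rightarrow> nat) \<Rightarrow> nat list \<Rightarrow> bool" where
  "filling n h T \<longleftrightarrow> length T = n \<and> distinct T \<and> set T = {1..n}
     \<and> (\<forall>t. Suc t < n \<longrightarrow> T ! t \<le> h (T ! Suc t))"

definition dim_pair :: "(nat \<Rightarrow> nat) \<Rightarrow> nat list \<Rightarrow> nat \<Rightarrow> nat \<Rightarrow> bool" where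
  "dim_pair h T a b \<longleftrightarrow> b > a \<and>
     (\<exists>p q. p < q \<and> q < length T \<and> T ! p = b \<and> T ! q = a
        \<and> (Suc q < length T \<longrightarrow> b \<le> h (T ! Suc q)))"

definition D_set :: "(nat \<Rightarrow> nat) \<Rightarrow> nat list \<Rightarrow> nat \<Rightarrow> nat set" where
  "D_set h T j = {a. dim_pair h T a j}"

text \<open>Phi(T) = prod_{j=2}^n x_j^{|D_j|}, as an exponent vector.\<close>
definition Phi :: "nat \<Rightarrow> (nat \<Rightarrow> nat) \<Rightarrow> nat list \<Rightarrow> (nat \<Rightarrow> nat)" where
  "Phi n h T = (\<lambda>j. if 2 \<le> j \<and> j \<le> n then card (D_set h T j) else 0)"

definition A_h :: "nat \<Rightarrow> (nat \<Rightarrow> nat) \<Rightarrow> (nat \<Rightarrow> nat) set" where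
  "A_h n h = {Phi n h T | T. filling n h T}"

end

theory Submission imports Defs begin

fun adjs :: "'a list \<Rightarrow> ('a \<times> 'a) set" where
  "adjs (x#y#zs) = insert (x,y) (adjs (y#zs))"
| "adjs _ = {}"

lemma adjs_Cons: "adjs (x#ys) = (case ys of [] \<Rightarrow> {} | y#_ \<Rightarrow> insert (x,y) (adjs ys))"
  by (cases ys) auto

lemma adjs_append: "adjs (xs@ys) = adjs xs \<union> adjs ys \<union> (if xs \<noteq> [] \<and> ys \<noteq> [] then {(last xs, hd ys)} else {})"
proof (induction xs rule: adjs.induct)
  case (1 x y zs)
  then show ?case by auto
next
  case ("2_1")
  then show ?case by simp
next
  case ("2_2" v)
  then show ?case by (cases ys) auto
qed

lemma adjs_mid: "adjs (xs @ n # ys) = adjs xs \<union> adjs ys \<union> (if xs \<noteq> [] then {(last xs, n)} else {})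
   \<union> (if ys \<noteq> [] then {(n, hd ys)} else {})"
proof -
  have "adjs (n#ys) = adjs ys \<union> (if ys \<noteq> [] then {(n, hd ys)} else {})" by (cases ys) auto
  then show ?thesis by (simp add: adjs_append Un_ac)
qed

lemma adjs_set: "(a,c) \<in> adjs T \<Longrightarrow> a \<in> set T \<and> c \<in> set T"
  by (induction T rule: adjs.induct) auto

lemma adjs_nth: "(a,c) \<in> adjs T \<longleftrightarrow> (\<exists>i. Suc i < length T \<and> T!i = a \<and> T!Suc i = c)"
proof (induction T rule: adjs.induct)
  case (1 x y zs)
  have "(\<exists>i. Suc i < length (x#y#zs) \<and> (x#y#zs)!i = a \<and> (x#y#zs)!Suc i = c) \<longleftrightarrow>
        (x = a \<and> y = c) \<or> (\<exists>i. Suc i < length (y#zs) \<and> (y#zs)!i = a \<and> (y#zs)!Suc i = c)"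
    (is "?L \<longleftrightarrow> ?R")
  proof
    assume ?L then obtain i where "Suc i < length (x#y#zs)" "(x#y#zs)!i = a" "(x#y#zs)!Suc i = c" by blast
    then show ?R by (cases i) auto
  next
    assume ?R then show ?L
    proof
      assume "x = a \<and> y = c" then show ?L by (intro exI[of _ 0]) auto
    next
      assume "\<exists>i. Suc i < length (y#zs) \<and> (y#zs)!i = a \<and> (y#zs)!Suc i = c"
      then obtain i where "Suc i < length (y#zs)" "(y#zs)!i = a" "(y#zs)!Suc i = c" by blast
      then show ?L by (intro exI[of _ "Suc i"]) auto
    qed
  qed
  with 1 show ?case by auto
qed auto

lemma filter_single: "distinct T \<Longrightarrow> filter (\<lambda>z. z = y) T = (if y \<in> set T then [y] else [])"
  by (induction T) auto

lemma filter_pair: "distinct T \<Longrightarrow> x \<noteq> y \<Longrightarrow>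
  filter (\<lambda>z. z=x \<or> z=y) T = [x,y] \<longleftrightarrow> (\<exists>p q. p<q \<and> q < length T \<and> T!p = x \<and> T!q = y)"
proof (induction T)
  case Nil
  then show ?case by simp
next
  case (Cons t T)
  show ?case
  proof (cases "t = x")
    case True
    have f: "filter (\<lambda>z. z=x \<or> z=y) T = filter (\<lambda>z. z = y) T"
      using Cons.prems True by (intro filter_cong) auto
    have "filter (\<lambda>z. z=x \<or> z=y) (t#T) = [x,y] \<longleftrightarrow> y \<in> set T"
      using Cons.prems True by (simp add: f filter_single)
    also have "\<dots> \<longleftrightarrow> (\<exists>p q. p<q \<and> q < length (t#T) \<and> (t#T)!p = x \<and> (t#T)!q = y)"
    proof
      assume "y \<in> set T"
      then obtain i where "i < length T" "T!i = y" by (auto simp: in_set_conv_nth)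
      then show "\<exists>p q. p<q \<and> q < length (t#T) \<and> (t#T)!p = x \<and> (t#T)!q = y"
        using True by (intro exI[of _ 0] exI[of _ "Suc i"]) auto
    next
      assume "\<exists>p q. p<q \<and> q < length (t#T) \<and> (t#T)!p = x \<and> (t#T)!q = y"
      then obtain p q where "p<q" "q < length (t#T)" "(t#T)!q = y" by blast
      then show "y \<in> set T" by (cases q) auto
    qed
    finally show ?thesis .
  next
    case False
    show ?thesis
    proof (cases "t = y")
      case True
      have "\<not> (\<exists>p q. p<q \<and> q < length (t#T) \<and> (t#T)!p = x \<and> (t#T)!q = y)"
      proof
        assume "\<exists>p q. p<q \<and> q < length (t#T) \<and> (t#T)!p = x \<and> (t#T)!q = y"
        then obtain p q where "p<q" "q < length (t#T)" "(t#T)!q = y" by blast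
        then obtain q' where "q = Suc q'" "q' < length T" "T!q' = y" by (cases q) auto
        then show False using Cons.prems True by (auto simp: in_set_conv_nth)
      qed
      then show ?thesis using True False by simp
    next
      case False2: False
      have "(\<exists>p q. p<q \<and> q < length (t#T) \<and> (t#T)!p = x \<and> (t#T)!q = y) \<longleftrightarrow>
            (\<exists>p q. p<q \<and> q < length T \<and> T!p = x \<and> T!q = y)"
      proof
        assume "\<exists>p q. p<q \<and> q < length (t#T) \<and> (t#T)!p = x \<and> (t#T)!q = y"
        then obtain p q where "p<q" "q < length (t#T)" "(t#T)!p = x" "(t#T)!q = y" by blast
        then show "\<exists>p q. p<q \<and> q < length T \<and> T!p = x \<and> T!q = y"
          using False False2 by (intro exI[of _ "p - 1"] exI[of _ "q - 1"]) (cases p; cases q; auto)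
      next
        assume "\<exists>p q. p<q \<and> q < length T \<and> T!p = x \<and> T!q = y"
        then obtain p q where "p<q" "q < length T" "T!p = x" "T!q = y" by blast
        then show "\<exists>p q. p<q \<and> q < length (t#T) \<and> (t#T)!p = x \<and> (t#T)!q = y"
          by (intro exI[of _ "Suc p"] exI[of _ "Suc q"]) auto
      qed
      then show ?thesis using Cons False False2 by simp
    qed
  qed
qed

lemma dim_pair_alt: "distinct T \<Longrightarrow> dim_pair h T a b \<longleftrightarrow>
   b > a \<and> filter (\<lambda>z. z=b \<or> z=a) T = [b,a] \<and> (\<forall>c. (a,c) \<in> adjs T \<longrightarrow> b \<le> h c)"
proof
  assume d: "distinct T" and dp: "dim_pair h T a b"
  then obtain p q where pq: "b > a" "p < q" "q < length T" "T ! p = b" "T ! q = a"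
        "Suc q < length T \<longrightarrow> b \<le> h (T ! Suc q)" unfolding dim_pair_def by blast
  have "\<forall>c. (a,c) \<in> adjs T \<longrightarrow> b \<le> h c"
  proof (intro allI impI)
    fix c assume "(a,c) \<in> adjs T"
    then obtain i where i: "Suc i < length T" "T!i = a" "T!Suc i = c" by (auto simp: adjs_nth)
    then have "i = q" using d pq by (metis Suc_lessD nth_eq_iff_index_eq)
    then show "b \<le> h c" using i pq by auto
  qed
  then show "b > a \<and> filter (\<lambda>z. z=b \<or> z=a) T = [b,a] \<and> (\<forall>c. (a,c) \<in> adjs T \<longrightarrow> b \<le> h c)"
    using pq d filter_pair[of T b a] by auto
next
  assume d: "distinct T" and r: "b > a \<and> filter (\<lambda>z. z=b \<or> z=a) T = [b,a] \<and> (\<forall>c. (a,c) \<in> adjs T \<longrightarrow> b \<le> h c)"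
  then obtain p q where pq: "p<q" "q < length T" "T!p = b" "T!q = a"
    using filter_pair[of T b a] by auto
  have "Suc q < length T \<longrightarrow> b \<le> h (T ! Suc q)"
    using r pq by (auto simp: adjs_nth)
  then show "dim_pair h T a b" unfolding dim_pair_def using r pq by blast
qed

lemma filling_alt: "filling n h T \<longleftrightarrow> length T = n \<and> distinct T \<and> set T = {1..n}
     \<and> (\<forall>(a,c)\<in>adjs T. a \<le> h c)"
proof -
  have "(\<forall>t. Suc t < length T \<longrightarrow> T ! t \<le> h (T ! Suc t)) \<longleftrightarrow> (\<forall>(a,c)\<in>adjs T. a \<le> h c)"
  proof
    assume A: "\<forall>t. Suc t < length T \<longrightarrow> T ! t \<le> h (T ! Suc t)"
    show "\<forall>(a,c)\<in>adjs T. a \<le> h c"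
    proof (clarify)
      fix a c assume "(a,c) \<in> adjs T"
      then obtain i where "Suc i < length T" "T!i = a" "T!Suc i = c" by (auto simp: adjs_nth)
      then show "a \<le> h c" using A by auto
    qed
  next
    assume A: "\<forall>(a,c)\<in>adjs T. a \<le> h c"
    show "\<forall>t. Suc t < length T \<longrightarrow> T ! t \<le> h (T ! Suc t)"
    proof (intro allI impI)
      fix t assume "Suc t < length T"
      then have "(T!t, T!Suc t) \<in> adjs T" by (auto simp: adjs_nth)
      then show "T ! t \<le> h (T ! Suc t)" using A by auto
    qed
  qed
  then show ?thesis unfolding filling_def
    by (cases "length T = n") simp_all
qed


definition trunc :: "nat \<Rightarrow> (nat \<Rightarrow> nat) \<Rightarrow> nat \<Rightarrow> nat" where
  "trunc m h = (\<lambda>i. min (h i) m)"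

lemma hess_le: "hessenberg n h \<Longrightarrow> c \<in> {1..n} \<Longrightarrow> h c \<le> n"
  unfolding hessenberg_def by auto

lemma hess_top: "hessenberg (Suc m) h \<Longrightarrow> h (Suc m) = Suc m"
  unfolding hessenberg_def by (metis atLeastAtMost_iff le_add1 le_antisym plus_1_eq_Suc order_refl)

lemma hess_trunc: "hessenberg (Suc m) h \<Longrightarrow> hessenberg m (trunc m h)"
  unfolding hessenberg_def trunc_def by (auto simp: min_def)

lemma G: "distinct ys \<Longrightarrow> ys \<noteq> [] \<Longrightarrow>
  card {a \<in> set ys. \<forall>c. (a,c) \<in> adjs ys \<longrightarrow> Q c} = Suc (length (filter Q (tl ys)))"
proof (induction ys rule: adjs.induct)
  case (1 y z r)
  have yn: "y \<notin> set (z#r)" using 1 by auto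
  have eq: "{a \<in> set (y#z#r). \<forall>c. (a,c)\<in>adjs (y#z#r) \<longrightarrow> Q c} =
     (if Q z then {y} else {}) \<union> {a \<in> set (z#r). \<forall>c. (a,c)\<in>adjs (z#r) \<longrightarrow> Q c}"
    using yn by (auto dest: adjs_set)
  have c: "card {a \<in> set (z#r). \<forall>c. (a,c)\<in>adjs (z#r) \<longrightarrow> Q c} = Suc (length (filter Q r))"
    using 1 by simp
  show ?case using yn c unfolding eq by (auto simp: card_insert_if)
qed auto

lemma filter_mid:
  assumes "n \<notin> set xs" "n \<notin> set ys" "a \<noteq> n" "distinct xs" "distinct ys"
  shows "filter (\<lambda>z. z = n \<or> z = a) (xs @ n # ys) =
     (if a \<in> set xs then [a] else []) @ n # (if a \<in> set ys then [a] else [])"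
proof -
  have "filter (\<lambda>z. z = n \<or> z = a) xs = filter (\<lambda>z. z = a) xs"
    using assms by (intro filter_cong) auto
  moreover have "filter (\<lambda>z. z = n \<or> z = a) ys = filter (\<lambda>z. z = a) ys"
    using assms by (intro filter_cong) auto
  ultimately show ?thesis using assms by (simp add: filter_single)
qed

lemma split_exists: "k \<le> length (filter Q L) \<Longrightarrow>
  \<exists>xs ys. L = xs @ ys \<and> length (filter Q ys) = k \<and> (ys = [] \<or> Q (hd ys))"
proof (induction L arbitrary: k)
  case Nil
  then show ?case by simp
next
  case (Cons x L)
  show ?case
  proof (cases "k \<le> length (filter Q L)")
    case True
    then obtain xs ys where "L = xs @ ys" "length (filter Q ys) = k" "ys = [] \<or> Q (hd ys)"
      using Cons.IH by blast
    then show ?thesis by (intro exI[of _ "x#xs"] exI[of _ ys]) auto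
  next
    case False
    then have "Q x" "k = length (filter Q (x#L))" using Cons.prems by (auto split: if_splits)
    then show ?thesis by (intro exI[of _ "[]"] exI[of _ "x#L"]) auto
  qed
qed

lemma filling_split:
  assumes H: "hessenberg (Suc m) h"
  shows "filling (Suc m) h T \<longleftrightarrow> (\<exists>xs ys. T = xs @ Suc m # ys \<and> filling m (trunc m h) (xs@ys)
           \<and> (ys = [] \<or> h (hd ys) = Suc m))"
proof
  assume F: "filling (Suc m) h T"
  then have F': "length T = Suc m" "distinct T" "set T = {1..Suc m}" "\<forall>(a,c)\<in>adjs T. a \<le> h c"
    by (auto simp: filling_alt)
  then have "Suc m \<in> set T" by auto
  then obtain xs ys where T: "T = xs @ Suc m # ys" by (meson split_list)
  have nx: "Suc m \<notin> set xs" "Suc m \<notin> set ys" "distinct (xs@ys)" using F' T by auto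
  have "set (xs@ys) = set T - {Suc m}" using T nx by auto
  also have "\<dots> = {1..m}" unfolding F'(3) by auto
  finally have st: "set (xs@ys) = {1..m}" .
  have le: "\<And>c. c \<in> set T \<Longrightarrow> h c \<le> Suc m" using hess_le[OF H] F' by auto
  have hy: "ys = [] \<or> h (hd ys) = Suc m"
  proof (cases ys)
    case (Cons y r)
    then have "(Suc m, y) \<in> adjs T" using T by (simp add: adjs_mid)
    then have "Suc m \<le> h y" using F' by auto
    moreover have "h y \<le> Suc m" using le T Cons by auto
    ultimately show ?thesis using Cons by simp
  qed simp
  have "\<forall>(a,c)\<in>adjs (xs@ys). a \<le> trunc m h c"
  proof (clarify)
    fix a c assume ac: "(a,c) \<in> adjs (xs@ys)"
    have am: "a \<le> m" using adjs_set[OF ac] st by auto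
    show "a \<le> trunc m h c"
    proof (cases "(a,c) \<in> adjs xs \<union> adjs ys")
      case True
      then have "(a,c) \<in> adjs T" using T by (auto simp: adjs_mid)
      then show ?thesis using F' am by (auto simp: trunc_def)
    next
      case False
      then have "xs \<noteq> [] \<and> ys \<noteq> [] \<and> a = last xs \<and> c = hd ys" using ac by (auto simp: adjs_append split: if_splits)
      then show ?thesis using hy am by (auto simp: trunc_def)
    qed
  qed
  then have "filling m (trunc m h) (xs@ys)"
    using F' T nx st by (auto simp: filling_alt)
  then show "\<exists>xs ys. T = xs @ Suc m # ys \<and> filling m (trunc m h) (xs@ys) \<and> (ys = [] \<or> h (hd ys) = Suc m)"
    using T hy by blast
next
  assume "\<exists>xs ys. T = xs @ Suc m # ys \<and> filling m (trunc m h) (xs@ys) \<and> (ys = [] \<or> h (hd ys) = Suc m)"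
  then obtain xs ys where T: "T = xs @ Suc m # ys" and F: "filling m (trunc m h) (xs@ys)"
     and hy: "ys = [] \<or> h (hd ys) = Suc m" by blast
  have F': "length (xs@ys) = m" "distinct (xs@ys)" "set (xs@ys) = {1..m}" "\<forall>(a,c)\<in>adjs (xs@ys). a \<le> trunc m h c"
    using F by (auto simp: filling_alt)
  have sm: "Suc m \<notin> set (xs@ys)" unfolding F'(3) by simp
  then have nx: "Suc m \<notin> set xs" "Suc m \<notin> set ys" by auto
  have stT: "set T = {1..Suc m}"
  proof -
    have "set T = insert (Suc m) (set (xs@ys))" using T by auto
    also have "\<dots> = {1..Suc m}" unfolding F'(3) by auto
    finally show ?thesis .
  qed
  have ht: "h (Suc m) = Suc m" using hess_top[OF H] .
  have "\<forall>(a,c)\<in>adjs T. a \<le> h c"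
  proof (clarify)
    fix a c assume ac: "(a,c) \<in> adjs T"
    show "a \<le> h c"
    proof (cases "(a,c) \<in> adjs xs \<union> adjs ys")
      case True
      then have "(a,c) \<in> adjs (xs@ys)" by (auto simp: adjs_append)
      then show ?thesis using F' by (auto simp: trunc_def)
    next
      case False
      then have "(xs \<noteq> [] \<and> a = last xs \<and> c = Suc m) \<or> (ys \<noteq> [] \<and> a = Suc m \<and> c = hd ys)"
        using ac T by (auto simp: adjs_mid split: if_splits)
      then show ?thesis
      proof
        assume "xs \<noteq> [] \<and> a = last xs \<and> c = Suc m"
        moreover then have "last xs \<in> set (xs@ys)" by auto
        then have "last xs \<in> {1..m}" using F'(3) by blast
        ultimately show ?thesis using ht by auto
      next
        assume "ys \<noteq> [] \<and> a = Suc m \<and> c = hd ys"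
        then show ?thesis using hy by auto
      qed
    qed
  qed
  moreover have "length T = Suc m" "distinct T" using F' T nx by auto
  ultimately show "filling (Suc m) h T" using stT by (simp add: filling_alt)
qed

lemma dp_same:
  assumes H: "hessenberg (Suc m) h" and F: "filling (Suc m) h (xs @ Suc m # ys)"
    and hy: "ys = [] \<or> h (hd ys) = Suc m" and jm: "j \<le> m"
  shows "dim_pair h (xs @ Suc m # ys) a j \<longleftrightarrow> dim_pair (trunc m h) (xs@ys) a j"
proof -
  have d: "distinct (xs @ Suc m # ys)" using F by (simp add: filling_def)
  then have d': "distinct (xs@ys)" by simp
  have ht: "h (Suc m) = Suc m" using hess_top[OF H] .
  show ?thesis
  proof (cases "a < j")
    case False
    then show ?thesis using d d' by (simp add: dim_pair_alt)
  next
    case True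
    have fe: "filter (\<lambda>z. z=j \<or> z=a) (xs @ Suc m # ys) = filter (\<lambda>z. z=j \<or> z=a) (xs @ ys)"
      using True jm by simp
    have "(\<forall>c. (a,c) \<in> adjs (xs @ Suc m # ys) \<longrightarrow> j \<le> h c) \<longleftrightarrow>
          (\<forall>c. (a,c) \<in> adjs (xs @ ys) \<longrightarrow> j \<le> trunc m h c)"
    proof
      assume A: "\<forall>c. (a,c) \<in> adjs (xs @ Suc m # ys) \<longrightarrow> j \<le> h c"
      show "\<forall>c. (a,c) \<in> adjs (xs @ ys) \<longrightarrow> j \<le> trunc m h c"
      proof (intro allI impI)
        fix c assume ac: "(a,c) \<in> adjs (xs@ys)"
        show "j \<le> trunc m h c"
        proof (cases "(a,c) \<in> adjs xs \<union> adjs ys")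
          case True
          then show ?thesis using A jm by (auto simp: adjs_mid trunc_def)
        next
          case False
          then have "ys \<noteq> [] \<and> c = hd ys" using ac by (auto simp: adjs_append split: if_splits)
          then show ?thesis using hy jm by (auto simp: trunc_def)
        qed
      qed
    next
      assume A: "\<forall>c. (a,c) \<in> adjs (xs @ ys) \<longrightarrow> j \<le> trunc m h c"
      show "\<forall>c. (a,c) \<in> adjs (xs @ Suc m # ys) \<longrightarrow> j \<le> h c"
      proof (intro allI impI)
        fix c assume ac: "(a,c) \<in> adjs (xs @ Suc m # ys)"
        show "j \<le> h c"
        proof (cases "(a,c) \<in> adjs xs \<union> adjs ys")
          case True
          then show ?thesis using A jm by (auto simp: adjs_append trunc_def)
        next
          case False
          then have "c = Suc m \<or> a = Suc m" using ac by (auto simp: adjs_mid split: if_splits)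
          then show ?thesis using ht jm True by auto
        qed
      qed
    qed
    then show ?thesis using d d' fe by (simp add: dim_pair_alt)
  qed
qed

lemma card_top:
  assumes H: "hessenberg (Suc m) h" and F: "filling (Suc m) h (xs @ Suc m # ys)"
    and hy: "ys = [] \<or> h (hd ys) = Suc m"
  shows "card (D_set h (xs @ Suc m # ys) (Suc m)) = length (filter (\<lambda>c. h c = Suc m) ys)"
proof -
  let ?T = "xs @ Suc m # ys"
  have d: "distinct ?T" and st: "set ?T = {1..Suc m}" using F by (auto simp: filling_def)
  have nx: "Suc m \<notin> set xs" "Suc m \<notin> set ys" "distinct xs" "distinct ys" using d by auto
  have le: "h c \<le> Suc m" if "c \<in> set ys" for c
  proof -
    have "c \<in> set ?T" using that by simp
    then have "c \<in> {1..Suc m}" using st by blast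
    then show ?thesis using hess_le[OF H] by blast
  qed
  have D: "D_set h ?T (Suc m) = {a \<in> set ys. \<forall>c. (a,c) \<in> adjs ys \<longrightarrow> h c = Suc m}"
  proof (intro set_eqI iffI)
    fix a assume "a \<in> D_set h ?T (Suc m)"
    then have a: "a < Suc m" "filter (\<lambda>z. z = Suc m \<or> z = a) ?T = [Suc m, a]"
      "\<forall>c. (a,c) \<in> adjs ?T \<longrightarrow> Suc m \<le> h c"
      using d by (auto simp: D_set_def dim_pair_alt)
    have an: "a \<noteq> Suc m" using a by simp
    have eq: "(if a \<in> set xs then [a] else []) @ Suc m # (if a \<in> set ys then [a] else []) = [Suc m, a]"
      using a(2) filter_mid[OF nx(1,2) an nx(3,4)] by simp
    have ay: "a \<notin> set xs" "a \<in> set ys" using eq an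
      by (cases "a \<in> set xs"; cases "a \<in> set ys"; simp)+
    have "\<forall>c. (a,c) \<in> adjs ys \<longrightarrow> h c = Suc m"
    proof (intro allI impI)
      fix c assume "(a,c) \<in> adjs ys"
      moreover then have "(a,c) \<in> adjs ?T" by (simp add: adjs_mid)
      ultimately show "h c = Suc m" using a le adjs_set by (metis le_antisym)
    qed
    then show "a \<in> {a \<in> set ys. \<forall>c. (a,c) \<in> adjs ys \<longrightarrow> h c = Suc m}" using ay by simp
  next
    fix a assume A: "a \<in> {a \<in> set ys. \<forall>c. (a,c) \<in> adjs ys \<longrightarrow> h c = Suc m}"
    then have ay: "a \<in> set ys" and an: "a \<noteq> Suc m" and ax: "a \<notin> set xs" using nx d by auto
    have "a \<le> Suc m" using st ay by auto
    then have al: "a < Suc m" using an by simp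
    have f: "filter (\<lambda>z. z = Suc m \<or> z = a) ?T = [Suc m, a]"
      using filter_mid[OF nx(1,2) an nx(3,4)] ay ax by simp
    have "\<forall>c. (a,c) \<in> adjs ?T \<longrightarrow> Suc m \<le> h c"
    proof (intro allI impI)
      fix c assume ac: "(a,c) \<in> adjs ?T"
      have "(a,c) \<in> adjs ys"
      proof -
        have "a \<noteq> last xs \<or> xs = []" using ax last_in_set by metis
        then show ?thesis using ac an ax adjs_set[of a c xs] by (auto simp: adjs_mid split: if_splits)
      qed
      then show "Suc m \<le> h c" using A by auto
    qed
    then show "a \<in> D_set h ?T (Suc m)" using d al f by (auto simp: D_set_def dim_pair_alt)
  qed
  show ?thesis
  proof (cases ys)
    case Nil
    then show ?thesis using D by simp
  next
    case (Cons y r)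
    then have "h y = Suc m" using hy by simp
    then show ?thesis unfolding D using G[of ys "\<lambda>c. h c = Suc m"] nx Cons by simp
  qed
qed

lemma Phi_split:
  assumes H: "hessenberg (Suc m) h" and F: "filling (Suc m) h (xs @ Suc m # ys)"
    and hy: "ys = [] \<or> h (hd ys) = Suc m"
  shows "Phi (Suc m) h (xs @ Suc m # ys) =
     (Phi m (trunc m h) (xs@ys))(Suc m := length (filter (\<lambda>c. h c = Suc m) ys))"
proof
  fix j
  show "Phi (Suc m) h (xs @ Suc m # ys) j =
     ((Phi m (trunc m h) (xs@ys))(Suc m := length (filter (\<lambda>c. h c = Suc m) ys))) j"
  proof (cases "j = Suc m")
    case True
    show ?thesis
    proof (cases "m = 0")
      case True
      then have "length (xs @ Suc m # ys) = 1" using F by (simp add: filling_def)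
      then have "ys = []" by simp
      then show ?thesis using True \<open>j = Suc m\<close> by (simp add: Phi_def)
    next
      case False
      then show ?thesis using True card_top[OF H F hy] by (simp add: Phi_def)
    qed
  next
    case False
    show ?thesis
    proof (cases "2 \<le> j \<and> j \<le> m")
      case True
      have "D_set h (xs @ Suc m # ys) j = D_set (trunc m h) (xs @ ys) j"
        unfolding D_set_def using dp_same[OF H F hy] True by auto
      then show ?thesis using True False by (simp add: Phi_def)
    next
      case c2: False
      then have n1: "\<not> (2 \<le> j \<and> j \<le> Suc m)" using False by auto
      have "Phi (Suc m) h (xs @ Suc m # ys) j = 0" unfolding Phi_def using n1 by (simp only: if_False)
      moreover have "Phi m (trunc m h) (xs @ ys) j = 0" unfolding Phi_def using c2 by (simp only: if_False)
      ultimately show ?thesis using False by simp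
    qed
  qed
qed

lemma deg1:
  assumes H: "hessenberg (Suc m) h" and i: "i \<in> {1..m}"
  shows "degree_tuple (Suc m) h i = degree_tuple m (trunc m h) i"
proof -
  have "{k\<in>{1..Suc m}. h k < i} = {k\<in>{1..m}. trunc m h k < i}"
  proof (intro set_eqI iffI)
    fix k assume k: "k \<in> {k\<in>{1..Suc m}. h k < i}"
    have "k \<noteq> Suc m" using k hess_top[OF H] i by auto
    then show "k \<in> {k\<in>{1..m}. trunc m h k < i}" using k by (auto simp: trunc_def)
  next
    fix k assume k: "k \<in> {k\<in>{1..m}. trunc m h k < i}"
    then show "k \<in> {k\<in>{1..Suc m}. h k < i}" using i by (auto simp: trunc_def min_def split: if_splits)
  qed
  then show ?thesis by (simp add: degree_tuple_def)
qed

lemma deg2: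
  assumes H: "hessenberg (Suc m) h"
  shows "degree_tuple (Suc m) h (Suc m) = int (card {k\<in>{1..m}. h k = Suc m}) + 1"
proof -
  have e1: "{k\<in>{1..Suc m}. h k < Suc m} = {k\<in>{1..m}. h k < Suc m}"
    using hess_top[OF H] by (auto simp: le_Suc_eq)
  have e2: "{1..m} = {k\<in>{1..m}. h k < Suc m} \<union> {k\<in>{1..m}. h k = Suc m}"
  proof -
    have "\<And>k. k \<in> {1..m} \<Longrightarrow> h k \<le> Suc m" using hess_le[OF H] by auto
    then show ?thesis by fastforce
  qed
  have "card {1..m} = card {k\<in>{1..m}. h k < Suc m} + card {k\<in>{1..m}. h k = Suc m}"
    by (subst e2, rule card_Un_disjoint) auto
  then have "card {k\<in>{1..m}. h k < Suc m} + card {k\<in>{1..m}. h k = Suc m} = m" by simp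
  then show ?thesis unfolding degree_tuple_def e1 by linarith
qed

lemma B_split:
  assumes H: "hessenberg (Suc m) h"
  shows "\<alpha> \<in> B_h (Suc m) h \<longleftrightarrow>
     \<alpha>(Suc m := 0) \<in> B_h m (trunc m h) \<and> \<alpha> (Suc m) \<le> card {k\<in>{1..m}. h k = Suc m}"
proof
  assume A: "\<alpha> \<in> B_h (Suc m) h"
  have AA: "(\<forall>i\<in>{1..Suc m}. 0 \<le> int (\<alpha> i) \<and> int (\<alpha> i) \<le> degree_tuple (Suc m) h i - 1)
    \<and> (\<forall>i. i \<notin> {1..Suc m} \<longrightarrow> \<alpha> i = 0)" using A unfolding B_h_def by (simp only: mem_Collect_eq)
  note A1 = conjunct1[OF AA] and A2 = conjunct2[OF AA]
  have "\<alpha>(Suc m := 0) \<in> B_h m (trunc m h)"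
    unfolding B_h_def
  proof (intro CollectI conjI ballI allI impI)
    fix i assume i: "i \<in> {1..m}"
    then have "i \<in> {1..Suc m}" "i \<noteq> Suc m" by auto
    moreover then have "int (\<alpha> i) \<le> degree_tuple (Suc m) h i - 1" using A1 by blast
    ultimately show "0 \<le> int ((\<alpha>(Suc m := 0)) i)" "int ((\<alpha>(Suc m := 0)) i) \<le> degree_tuple m (trunc m h) i - 1"
      using deg1[OF H i] by auto
  next
    fix i assume i: "i \<notin> {1..m}"
    then show "(\<alpha>(Suc m := 0)) i = 0" using A2 by (cases "i = Suc m") auto
  qed
  moreover have "\<alpha> (Suc m) \<le> card {k\<in>{1..m}. h k = Suc m}"
  proof -
    have "int (\<alpha> (Suc m)) \<le> degree_tuple (Suc m) h (Suc m) - 1" using A1 by simp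
    then show ?thesis using deg2[OF H] by simp
  qed
  ultimately show "\<alpha>(Suc m := 0) \<in> B_h m (trunc m h) \<and> \<alpha> (Suc m) \<le> card {k\<in>{1..m}. h k = Suc m}" by blast
next
  assume A: "\<alpha>(Suc m := 0) \<in> B_h m (trunc m h) \<and> \<alpha> (Suc m) \<le> card {k\<in>{1..m}. h k = Suc m}"
  have BB: "(\<forall>i\<in>{1..m}. 0 \<le> int ((\<alpha>(Suc m := 0)) i) \<and> int ((\<alpha>(Suc m := 0)) i) \<le> degree_tuple m (trunc m h) i - 1)
    \<and> (\<forall>i. i \<notin> {1..m} \<longrightarrow> (\<alpha>(Suc m := 0)) i = 0)" using conjunct1[OF A] unfolding B_h_def by (simp only: mem_Collect_eq)
  note B1 = conjunct1[OF BB] and B2 = conjunct2[OF BB]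
  show "\<alpha> \<in> B_h (Suc m) h"
    unfolding B_h_def
  proof (intro CollectI conjI ballI allI impI)
    fix i assume i: "i \<in> {1..Suc m}"
    show "0 \<le> int (\<alpha> i)" by simp
    show "int (\<alpha> i) \<le> degree_tuple (Suc m) h i - 1"
    proof (cases "i = Suc m")
      case True
      then show ?thesis using A deg2[OF H] by simp
    next
      case False
      then have i': "i \<in> {1..m}" using i by auto
      then have "int ((\<alpha>(Suc m := 0)) i) \<le> degree_tuple m (trunc m h) i - 1" using B1 by blast
      then show ?thesis using deg1[OF H i'] False by simp
    qed
  next
    fix i assume i: "i \<notin> {1..Suc m}"
    then have "i \<noteq> Suc m" "i \<notin> {1..m}" by auto
    then have "(\<alpha>(Suc m := 0)) i = 0" using B2 by blast
    then show "\<alpha> i = 0" using \<open>i \<noteq> Suc m\<close> by simp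
  qed
qed

lemma cnt_filter:
  assumes "filling m g L"
  shows "length (filter Q L) = card {k\<in>{1..m}. Q k}"
proof -
  have "distinct L" "set L = {1..m}" using assms by (auto simp: filling_def)
  then have "length (filter Q L) = card ({x. Q x} \<inter> {1..m})" by (simp add: distinct_length_filter)
  also have "{x. Q x} \<inter> {1..m} = {k\<in>{1..m}. Q k}" by auto
  finally show ?thesis .
qed

theorem mainTheorem18:
  fixes n :: nat and h :: "nat \<Rightarrow> nat"
  assumes "hessenberg n h"
  shows "A_h n h = B_h n h"
  using assms
proof (induction n arbitrary: h)
  case 0
  have f0: "filling 0 h T \<longleftrightarrow> T = []" for T by (auto simp: filling_def)
  have p0: "Phi 0 h [] = (\<lambda>_. 0)" by (simp add: Phi_def fun_eq_iff)
  have "A_h 0 h = {Phi 0 h []}" unfolding A_h_def f0 by blast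
  then have a0: "A_h 0 h = {\<lambda>_. 0}" using p0 by simp
  have "\<alpha> \<in> B_h 0 h \<longleftrightarrow> \<alpha> = (\<lambda>_. 0)" for \<alpha>
  proof
    assume "\<alpha> \<in> B_h 0 h"
    then have "\<forall>i. i \<notin> {1..0::nat} \<longrightarrow> \<alpha> i = 0" unfolding B_h_def mem_Collect_eq by (rule conjunct2)
    then show "\<alpha> = (\<lambda>_. 0)" by (simp add: fun_eq_iff)
  next
    assume "\<alpha> = (\<lambda>_. 0)"
    then show "\<alpha> \<in> B_h 0 h" unfolding B_h_def by simp
  qed
  then have "B_h 0 h = {\<lambda>_. 0}" by blast
  then show ?case using a0 by simp
next
  case (Suc m)
  note H = Suc.prems
  let ?g = "trunc m h"
  let ?Q = "\<lambda>c. h c = Suc m"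
  have IH: "A_h m ?g = B_h m ?g" using Suc.IH hess_trunc[OF H] by blast
  show ?case
  proof (intro set_eqI iffI)
    fix \<alpha> assume "\<alpha> \<in> A_h (Suc m) h"
    then obtain T where F: "filling (Suc m) h T" and a: "\<alpha> = Phi (Suc m) h T" unfolding A_h_def by blast
    then obtain xs ys where T: "T = xs @ Suc m # ys" and FL: "filling m ?g (xs@ys)"
        and hy: "ys = [] \<or> h (hd ys) = Suc m"
      using filling_split[OF H] by blast
    define \<beta> where "\<beta> = Phi m ?g (xs@ys)"
    have aeq: "\<alpha> = \<beta>(Suc m := length (filter ?Q ys))"
      using Phi_split[OF H F[unfolded T] hy] a T \<beta>_def by simp
    have "\<beta> \<in> A_h m ?g" unfolding A_h_def using FL \<beta>_def by blast
    then have "\<beta> \<in> B_h m ?g" using IH by simp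
    moreover have "\<beta> (Suc m) = 0" unfolding \<beta>_def Phi_def by simp
    moreover have "\<alpha>(Suc m := 0) = \<beta>" using \<open>\<beta> (Suc m) = 0\<close> unfolding aeq by (simp add: fun_eq_iff)
    ultimately have "\<alpha>(Suc m := 0) \<in> B_h m ?g" by simp
    moreover have "\<alpha> (Suc m) \<le> card {k\<in>{1..m}. h k = Suc m}"
    proof -
      have "length (filter ?Q ys) \<le> length (filter ?Q (xs@ys))" by simp
      then show ?thesis using aeq cnt_filter[OF FL, of ?Q] by simp
    qed
    ultimately show "\<alpha> \<in> B_h (Suc m) h" using B_split[OF H] by blast
  next
    fix \<alpha> assume "\<alpha> \<in> B_h (Suc m) h"
    then have B1: "\<alpha>(Suc m := 0) \<in> B_h m ?g" and B2: "\<alpha> (Suc m) \<le> card {k\<in>{1..m}. h k = Suc m}"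
      using B_split[OF H] by auto
    then have "\<alpha>(Suc m := 0) \<in> A_h m ?g" using IH by simp
    then have "\<exists>L. \<alpha>(Suc m := 0) = Phi m ?g L \<and> filling m ?g L" unfolding A_h_def by (simp only: mem_Collect_eq)
    then obtain L where FL: "filling m ?g L" and pl: "Phi m ?g L = \<alpha>(Suc m := 0)" by metis
    have "\<alpha> (Suc m) \<le> length (filter ?Q L)" using B2 cnt_filter[OF FL, of ?Q] by linarith
    then obtain xs ys where L: "L = xs @ ys" and ly: "length (filter ?Q ys) = \<alpha> (Suc m)"
        and hy: "ys = [] \<or> ?Q (hd ys)"
      using split_exists by blast
    have F: "filling (Suc m) h (xs @ Suc m # ys)"
      using filling_split[OF H] FL L hy by blast
    have "Phi (Suc m) h (xs @ Suc m # ys) = (\<alpha>(Suc m := 0))(Suc m := \<alpha> (Suc m))"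
      using Phi_split[OF H F hy] pl L ly by simp
    also have "\<dots> = \<alpha>" by simp
    finally show "\<alpha> \<in> A_h (Suc m) h" using F unfolding A_h_def by blast
  qed
qed

end
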